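(* Let $G$ be a connected graph and let $e=uv\in E(G)$ be an edge with $\min\{\deg_G(u),\deg_G(v)\}\geq 2$. Let $G'$ be the graph obtained from $G$ by applying Operation 1 to $e$, i.e. deleting the edge $uv$ and adding two new vertices $u_e,v_e$ together with the edges $uu_e$ and $vv_e$ (so $\deg_{G'}(u_e)=\deg_{G'}(v_e)=1$). Then $rc(L(G))\leq rc(L(G'))$.
   Context: All graphs are simple, finite and undirected. $L(H)$ denotes the line graph of $H$: its vertex set is $E(H)$, two vertices being adjacent iff the corresponding edges share an end. For an edge-colouring of a graph (adjacent edges may receive the same colour), a path is rainbow if no two of its edges have the same colour; the graph is rainbow connected if every two vertices are joined by a rainbow path. The rainbow connection number $rc(H)$ of a connected graph $H$ is the smallest number of colours in an edge-colouring making $H$ rainbow connected (if $H$ is disconnected, $rc(H)$ is taken to be $\infty$). *)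

theory Defs
  imports Main "HOL-Library.Extended_Nat"
begin

definition simple_graph :: "'a set \<Rightarrow> 'a set set \<Rightarrow> bool" where
  "simple_graph V E \<longleftrightarrow> finite V \<and>
     (\<forall>e\<in>E. \<exists>x y. x \<in> V \<and> y \<in> V \<and> x \<noteq> y \<and> e = {x, y})"

definition degree :: "'a set set \<Rightarrow> 'a \<Rightarrow> nat" where
  "degree E v = card {e \<in> E. v \<in> e}"

definition is_path :: "'a set \<Rightarrow> 'a set set \<Rightarrow> 'a list \<Rightarrow> bool" where
  "is_path V E xs \<longleftrightarrow> xs \<noteq> [] \<and> distinct xs \<and> set xs \<subseteq> V \<and>
     (\<forall>i. Suc i < length xs \<longrightarrow> {xs ! i, xs ! Suc i} \<in> E)"

definition path_edges :: "'a list \<Rightarrow> 'a set list" where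
  "path_edges xs = map (\<lambda>i. {xs ! i, xs ! Suc i}) [0..<length xs - 1]"

definition connected_graph :: "'a set \<Rightarrow> 'a set set \<Rightarrow> bool" where
  "connected_graph V E \<longleftrightarrow>
     (\<forall>x\<in>V. \<forall>y\<in>V. \<exists>xs. is_path V E xs \<and> hd xs = x \<and> last xs = y)"

definition rainbow_connected :: "'a set \<Rightarrow> 'a set set \<Rightarrow> ('a set \<Rightarrow> nat) \<Rightarrow> bool" where
  "rainbow_connected V E c \<longleftrightarrow>
     (\<forall>x\<in>V. \<forall>y\<in>V. \<exists>xs. is_path V E xs \<and> hd xs = x \<and> last xs = y \<and>
        distinct (map c (path_edges xs)))"

definition rc :: "'a set \<Rightarrow> 'a set set \<Rightarrow> enat" where
  "rc V E = (if connected_graph V E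
     then enat (LEAST k. \<exists>c. (\<forall>e\<in>E. c e < k) \<and> rainbow_connected V E c)
     else \<infinity>)"

definition line_graph_edges :: "'a set set \<Rightarrow> 'a set set set" where
  "line_graph_edges E = {{e, f} | e f. e \<in> E \<and> f \<in> E \<and> e \<noteq> f \<and> e \<inter> f \<noteq> {}}"

definition rc_line :: "'a set set \<Rightarrow> enat" where
  "rc_line E = rc E (line_graph_edges E)"

end

theory Submission imports Defs begin
lemma pe_nil[simp]: "path_edges [] = []" by (simp add: path_edges_def)
lemma pe_single[simp]: "path_edges [x] = []" by (simp add: path_edges_def)
lemma pe_cons2[simp]: "path_edges (x # y # zs) = {x,y} # path_edges (y # zs)"
  unfolding path_edges_def by (simp add: upt_conv_Cons map_Suc_upt[symmetric] del: upt_Suc)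
lemma pe_append: "path_edges (xs @ z # ys) = path_edges (xs @ [z]) @ path_edges (z # ys)"
proof (induction xs)
  case Nil then show ?case by simp
next
  case (Cons x xs) then show ?case by (cases xs) auto
qed
lemma pe_map: "path_edges (map f xs) = map (\<lambda>s. f ` s) (path_edges xs)"
  by (induction xs rule: induct_list012) auto
lemma pe_set: "(\<forall>i. Suc i < length xs \<longrightarrow> {xs ! i, xs ! Suc i} \<in> E) \<longleftrightarrow> set (path_edges xs) \<subseteq> E"
  unfolding path_edges_def by auto
lemma pe_sub: "s \<in> set (path_edges xs) \<Longrightarrow> s \<subseteq> set xs"
  by (induction xs arbitrary: s rule: induct_list012) auto
lemma pe_distinct: "distinct xs \<Longrightarrow> distinct (path_edges xs)"
  by (induction xs rule: induct_list012) (auto dest: pe_sub)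

lemma rainbow_conn: "rainbow_connected V E c \<Longrightarrow> connected_graph V E"
  unfolding rainbow_connected_def connected_graph_def by blast

lemma exists_col:
  assumes "finite E" "connected_graph V E"
  shows "\<exists>k c. (\<forall>e\<in>E. c e < k) \<and> rainbow_connected V E c"
proof -
  obtain h where h: "bij_betw h E {0..<card E}" using ex_bij_betw_finite_nat[OF assms(1)] by blast
  have "rainbow_connected V E h"
    unfolding rainbow_connected_def
  proof (intro ballI)
    fix x y assume "x \<in> V" "y \<in> V"
    then obtain xs where xs: "is_path V E xs" "hd xs = x" "last xs = y"
      using assms(2) unfolding connected_graph_def by blast
    have s1: "set (path_edges xs) \<subseteq> E" using xs(1) pe_set unfolding is_path_def by blast
    have s2: "distinct (path_edges xs)" using xs(1) pe_distinct unfolding is_path_def by blast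
    have "distinct (map h (path_edges xs))"
      proof -
      have "inj_on h E" using h by (simp add: bij_betw_def)
      then have "inj_on h (set (path_edges xs))" using s1 by (rule inj_on_subset)
      then show ?thesis using s2 by (simp add: distinct_map)
    qed
    then show "\<exists>xs. is_path V E xs \<and> hd xs = x \<and> last xs = y \<and> distinct (map h (path_edges xs))"
      using xs by blast
  qed
  moreover have "\<forall>e\<in>E. h e < card E" using h by (auto simp: bij_betw_def)
  ultimately show ?thesis by blast
qed

lemma split2:
  assumes "x \<in> set xs" "y \<in> set xs" "x \<noteq> y"
  shows "\<exists>X p Y q Z. xs = X @ p # Y @ q # Z \<and> ((p = x \<and> q = y) \<or> (p = y \<and> q = x))"
proof -
  obtain A1 A2 where A: "xs = A1 @ x # A2" using split_list[OF assms(1)] by blast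
  have "y \<in> set A1 \<or> y \<in> set A2" using assms(2,3) A by auto
  moreover have ?thesis if y2: "y \<in> set A2"
  proof -
    obtain B C where "A2 = B @ y # C" using split_list[OF y2] by blast
    then show ?thesis using A by blast
  qed
  moreover have ?thesis if y1: "y \<in> set A1"
  proof -
    obtain B C where "A1 = B @ y # C" using split_list[OF y1] by blast
    then show ?thesis using A by (metis append.assoc append_Cons)
  qed
  ultimately show ?thesis by blast
qed

locale opsetup =
  fixes V :: "'a set" and E :: "'a set set" and u v ue ve :: 'a
  assumes sg: "simple_graph V E" and uvE: "{u,v} \<in> E" and ueV: "ue \<notin> V"
    and veV: "ve \<notin> V" and ne: "ue \<noteq> ve"
begin

abbreviation "e \<equiv> {u,v}"
abbreviation "a \<equiv> {u,ue}"
abbreviation "b \<equiv> {v,ve}"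
abbreviation "E' \<equiv> (E - {e}) \<union> {a, b}"

definition f where "f x = (if x = a \<or> x = b then e else x)"
definition g where "g t = (if e \<in> t then (let w = (THE w. w \<in> t \<and> w \<noteq> e) in {if u \<in> w then a else b, w}) else t)"

lemma Etwo: "x \<in> E \<Longrightarrow> \<exists>p q. p \<in> V \<and> q \<in> V \<and> p \<noteq> q \<and> x = {p,q}"
  using sg unfolding simple_graph_def by blast

lemma Esub: "x \<in> E \<Longrightarrow> x \<subseteq> V" using Etwo by blast

lemma uv: "u \<noteq> v" "u \<in> V" "v \<in> V"
  using Etwo[OF uvE] by (auto simp: doubleton_eq_iff)

lemma ue_notin: "x \<in> E \<Longrightarrow> ue \<notin> x" "x \<in> E \<Longrightarrow> ve \<notin> x"
  using Esub ueV veV by blast+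

lemma abE: "a \<notin> E" "b \<notin> E" using ue_notin by blast+

lemma ab_disj: "a \<inter> b = {}" using uv ueV veV ne by auto

lemma e_notin: "e \<noteq> a" "e \<noteq> b" using uv ueV veV by (auto simp: doubleton_eq_iff)

lemma two_uv: "q \<in> E \<Longrightarrow> u \<in> q \<Longrightarrow> v \<in> q \<Longrightarrow> q = e"
  using Etwo uv(1) by fastforce

lemma f_E': "x \<in> E' \<Longrightarrow> f x \<in> E"
  using uvE by (auto simp: f_def)

lemma f_id: "x \<noteq> a \<Longrightarrow> x \<noteq> b \<Longrightarrow> f x = x" by (simp add: f_def)

lemma line_mem: "x \<in> F \<Longrightarrow> y \<in> F \<Longrightarrow> x \<noteq> y \<Longrightarrow> x \<inter> y \<noteq> {} \<Longrightarrow> {x,y} \<in> line_graph_edges F"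
  unfolding line_graph_edges_def by blast

lemma gq: "q \<noteq> e \<Longrightarrow> g {e, q} = {if u \<in> q then a else b, q}"
proof -
  assume q: "q \<noteq> e"
  have "(THE w. w \<in> {e,q} \<and> w \<noteq> e) = q"
  proof (rule the_equality)
    show "q \<in> {e,q} \<and> q \<noteq> e" using q by simp
  next
    fix w assume "w \<in> {e,q} \<and> w \<noteq> e" then show "w = q" by blast
  qed
  then show ?thesis unfolding g_def by (simp add: Let_def)
qed

lemma side1:
  assumes "q \<in> E" "q \<noteq> e" "a \<inter> q \<noteq> {}"
  shows "f ` {a,q} \<in> line_graph_edges E \<and> g (f ` {a,q}) = {a,q}"
proof -
  have fq: "f q = q" using assms(1) abE by (auto simp: f_def)
  have fa: "f a = e" by (simp add: f_def)
  have uq: "u \<in> q" using assms(3) ue_notin(1)[OF assms(1)] by blast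
  have fi: "f ` {a,q} = {e,q}" using fq fa by simp
  have "{e,q} \<in> line_graph_edges E" using line_mem[OF uvE assms(1)] assms(2) uq by blast
  then show ?thesis unfolding fi using gq[OF assms(2)] uq by simp
qed

lemma side2:
  assumes "q \<in> E" "q \<noteq> e" "b \<inter> q \<noteq> {}"
  shows "f ` {b,q} \<in> line_graph_edges E \<and> g (f ` {b,q}) = {b,q}"
proof -
  have fq: "f q = q" using assms(1) abE by (auto simp: f_def)
  have fa: "f b = e" by (simp add: f_def)
  have vq: "v \<in> q" using assms(3) ue_notin(2)[OF assms(1)] by blast
  have uq: "u \<notin> q" using two_uv assms vq by blast
  have fi: "f ` {b,q} = {e,q}" using fq fa by simp
  have "{e,q} \<in> line_graph_edges E" using line_mem[OF uvE assms(1)] assms(2) vq by blast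
  then show ?thesis unfolding fi using gq[OF assms(2)] uq by simp
qed

lemma side3:
  assumes "p \<in> E" "p \<noteq> e" "q \<in> E" "q \<noteq> e" "p \<noteq> q" "p \<inter> q \<noteq> {}"
  shows "f ` {p,q} \<in> line_graph_edges E \<and> g (f ` {p,q}) = {p,q}"
proof -
  have fq: "f q = q" using assms(3) abE by (auto simp: f_def)
  have fp: "f p = p" using assms(1) abE by (auto simp: f_def)
  have fi: "f ` {p,q} = {p,q}" using fq fp by simp
  have "e \<notin> {p,q}" using assms by auto
  then have "g {p,q} = {p,q}" unfolding g_def by simp
  moreover have "{p,q} \<in> line_graph_edges E" using line_mem[OF assms(1,3,5,6)] .
  ultimately show ?thesis unfolding fi by simp
qed

lemma key:
  assumes "s \<in> line_graph_edges E'"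
  shows "f ` s \<in> line_graph_edges E \<and> g (f ` s) = s"
proof -
  obtain p q where s: "s = {p,q}" "p \<in> E'" "q \<in> E'" "p \<noteq> q" "p \<inter> q \<noteq> {}"
    using assms unfolding line_graph_edges_def by blast
  have sw: "{q,p} = {p,q}" by (rule insert_commute)
  have sw2: "q \<inter> p \<noteq> {}" using s(5) by (simp add: Int_commute)
  have Ep: "p = a \<or> p = b \<or> (p \<in> E \<and> p \<noteq> e)" using s(2) by simp
  have Eq: "q = a \<or> q = b \<or> (q \<in> E \<and> q \<noteq> e)" using s(3) by simp
  show ?thesis
  proof (cases "p = a")
    case pa: True
    show ?thesis
    proof (cases "q = b")
      case True then have False using pa s(5) ab_disj by simp
      then show ?thesis ..
    next
      case False
      then have "q \<in> E \<and> q \<noteq> e" using Eq pa s(4) by blast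
      then show ?thesis using side1[of q] pa s(1,5) by simp
    qed
  next
    case pna: False
    show ?thesis
    proof (cases "p = b")
      case pb: True
      show ?thesis
      proof (cases "q = a")
        case True then have False using pb s(5) ab_disj by (simp add: Int_commute)
        then show ?thesis ..
      next
        case False
        then have "q \<in> E \<and> q \<noteq> e" using Eq pb s(4) by blast
        then show ?thesis using side2[of q] pb s(1,5) by simp
      qed
    next
      case pnb: False
      then have pE: "p \<in> E \<and> p \<noteq> e" using Ep pna by blast
      consider "q = a" | "q = b" | "q \<in> E \<and> q \<noteq> e" using Eq by blast
      then show ?thesis
      proof cases
        case 1
        have ss: "s = {a,p}" using 1 s(1) by blast
        have "a \<inter> p \<noteq> {}" using sw2 1 by simp
        with side1[of p] pE have "f ` {a,p} \<in> line_graph_edges E \<and> g (f ` {a,p}) = {a,p}" by blast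
        then show ?thesis unfolding ss .
      next
        case 2
        have ss: "s = {b,p}" using 2 s(1) by blast
        have "b \<inter> p \<noteq> {}" using sw2 2 by simp
        with side2[of p] pE have "f ` {b,p} \<in> line_graph_edges E \<and> g (f ` {b,p}) = {b,p}" by blast
        then show ?thesis unfolding ss .
      next
        case 3 then show ?thesis using side3[of p q] pE s by simp
      qed
    qed
  qed
qed

lemma surj_line:
  assumes "t \<in> line_graph_edges E"
  shows "\<exists>s \<in> line_graph_edges E'. t = f ` s"
proof -
  obtain x y where t: "t = {x,y}" "x \<in> E" "y \<in> E" "x \<noteq> y" "x \<inter> y \<noteq> {}"
    using assms unfolding line_graph_edges_def by blast
  have gen: "\<exists>s \<in> line_graph_edges E'. {x,y} = f ` s"
    if xy: "x \<in> E" "y \<in> E" "x \<noteq> y" "x \<inter> y \<noteq> {}" "y \<noteq> e" for x y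
  proof -
    have fy: "f y = y" using xy abE by (auto simp: f_def)
    show ?thesis
    proof (cases "x = e")
      case True
      then consider "u \<in> y" | "v \<in> y" using xy by blast
      then show ?thesis
      proof cases
        case 1
        have m: "{a,y} \<in> line_graph_edges E'" using line_mem[of a E' y] xy 1 abE by blast
        have "f a = e" by (simp add: f_def)
        then have "f ` {a,y} = {x,y}" using True fy by simp
        then show ?thesis using m by blast
      next
        case 2
        have m: "{b,y} \<in> line_graph_edges E'" using line_mem[of b E' y] xy 2 abE by blast
        have "f b = e" by (simp add: f_def)
        then have "f ` {b,y} = {x,y}" using True fy by simp
        then show ?thesis using m by blast
      qed
    next
      case False
      have "f x = x" using xy abE by (auto simp: f_def)
      moreover have "{x,y} \<in> line_graph_edges E'" using line_mem[of x E' y] xy False by blast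
      ultimately show ?thesis using fy by (metis image_empty image_insert)
    qed
  qed
  show ?thesis
  proof (cases "y = e")
    case False then show ?thesis using gen t by blast
  next
    case True
    then have "x \<noteq> e" using t by blast
    have "{y,x} = {x,y}" by blast
    moreover have "y \<inter> x \<noteq> {}" using t by blast
    ultimately show ?thesis using gen[of y x] t \<open>x \<noteq> e\<close> by metis
  qed
qed


lemma transfer_pe:
  assumes "set (path_edges zs) \<subseteq> line_graph_edges E'"
  shows "map (c' \<circ> g) (path_edges (map f zs)) = map c' (path_edges zs) \<and>
         set (path_edges (map f zs)) \<subseteq> line_graph_edges E"
proof -
  have "map (c' \<circ> g) (path_edges (map f zs)) = map (\<lambda>s. c' (g (f ` s))) (path_edges zs)"
    by (simp add: pe_map)
  also have "\<dots> = map c' (path_edges zs)"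
    using assms key by (intro map_cong) auto
  finally show ?thesis using assms key by (auto simp: pe_map)
qed

lemma E'_cases: "x \<in> E' \<Longrightarrow> x \<noteq> a \<Longrightarrow> x \<noteq> b \<Longrightarrow> x \<in> E \<and> x \<noteq> e" by simp

lemma path_transfer:
  assumes P: "is_path E' (line_graph_edges E') xs" and D: "distinct (map c' (path_edges xs))"
  shows "\<exists>ys. is_path E (line_graph_edges E) ys \<and> hd ys = f (hd xs) \<and> last ys = f (last xs)
           \<and> distinct (map (c' \<circ> g) (path_edges ys))"
proof -
  have ne: "xs \<noteq> []" and dx: "distinct xs" and sx: "set xs \<subseteq> E'"
    and ax: "set (path_edges xs) \<subseteq> line_graph_edges E'"
    using P pe_set unfolding is_path_def by blast+
  show ?thesis
  proof (cases "a \<in> set xs \<and> b \<in> set xs")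
    case False
    have inj: "inj_on f (set xs)"
    proof (rule inj_onI)
      fix x y assume xy: "x \<in> set xs" "y \<in> set xs" "f x = f y"
      have "x \<in> E'" "y \<in> E'" using xy sx by auto
      show "x = y"
      proof (cases "x = a \<or> x = b")
        case True
        then have "f x = e" by (auto simp: f_def)
        then have "y = a \<or> y = b" using xy(3) \<open>y \<in> E'\<close> unfolding f_def by (auto split: if_splits)
        then show ?thesis using True False xy by blast
      next
        case xn: False
        then have "f x = x" by (simp add: f_def)
        moreover have "x \<noteq> e" using \<open>x \<in> E'\<close> xn by auto
        ultimately show ?thesis using xy(3) unfolding f_def by (auto split: if_splits)
      qed
    qed
    define ys where "ys = map f xs"
    have T: "map (c' \<circ> g) (path_edges ys) = map c' (path_edges xs)"
      "set (path_edges ys) \<subseteq> line_graph_edges E" using transfer_pe[OF ax] ys_def by auto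
    have "is_path E (line_graph_edges E) ys"
      unfolding is_path_def
    proof (intro conjI)
      show "ys \<noteq> []" using ne ys_def by simp
      show "distinct ys" using dx inj ys_def by (simp add: distinct_map)
      show "set ys \<subseteq> E" using sx f_E' ys_def by auto
      show "\<forall>i. Suc i < length ys \<longrightarrow> {ys ! i, ys ! Suc i} \<in> line_graph_edges E"
        using T(2) pe_set by blast
    qed
    moreover have "hd ys = f (hd xs)" "last ys = f (last xs)" using ne ys_def
      by (auto simp: hd_map last_map)
    ultimately show ?thesis using T(1) D by metis
  next
    case True
    have "a \<noteq> b" using ab_disj by auto
    obtain X p Y q Z where xs: "xs = X @ p # Y @ q # Z" and pq: "(p = a \<and> q = b) \<or> (p = b \<and> q = a)"
      using split2[of a xs b] True \<open>a \<noteq> b\<close> by blast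
    have dxs: "distinct (X @ p # Y @ q # Z)" using dx xs by simp
    have XZ: "a \<notin> set X" "b \<notin> set X" "a \<notin> set Z" "b \<notin> set Z"
      using dxs pq by auto
    have XZE: "set X \<subseteq> E - {e}" "set Z \<subseteq> E - {e}" using sx xs XZ by auto
    have mX: "map f X = X" using XZ by (intro map_idI) (auto simp: f_def)
    have mZ: "map f Z = Z" using XZ by (intro map_idI) (auto simp: f_def)
    have fp: "f p = e" "f q = e" using pq by (auto simp: f_def)
    define ys where "ys = X @ e # Z"
    have ys1: "X @ [e] = map f (X @ [p])" using mX fp by simp
    have ys2: "e # Z = map f (q # Z)" using mZ fp by simp
    have pexs: "path_edges xs = path_edges (X @ [p]) @ path_edges (p # Y @ [q]) @ path_edges (q # Z)"
      unfolding xs using pe_append[of X p "Y @ q # Z"] pe_append[of "p # Y" q Z] by simp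
    have ax1: "set (path_edges (X @ [p])) \<subseteq> line_graph_edges E'" using ax pexs by auto
    have ax2: "set (path_edges (q # Z)) \<subseteq> line_graph_edges E'" using ax pexs by auto
    have peys: "path_edges ys = path_edges (map f (X @ [p])) @ path_edges (map f (q # Z))"
      unfolding ys_def ys1[symmetric] ys2[symmetric] by (rule pe_append)
    note T1 = transfer_pe[OF ax1] and T2 = transfer_pe[OF ax2]
    have col: "map (c' \<circ> g) (path_edges ys) = map c' (path_edges (X @ [p])) @ map c' (path_edges (q # Z))"
      using peys T1[of c'] T2[of c'] by simp
    have "is_path E (line_graph_edges E) ys"
      unfolding is_path_def
    proof (intro conjI)
      show "ys \<noteq> []" using ys_def by simp
      show "distinct ys" using dxs XZE e_notin unfolding ys_def by auto
      show "set ys \<subseteq> E" using XZE uvE ys_def by auto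
      have "set (path_edges ys) \<subseteq> line_graph_edges E" using peys T1 T2 by auto
      then show "\<forall>i. Suc i < length ys \<longrightarrow> {ys ! i, ys ! Suc i} \<in> line_graph_edges E"
        using pe_set by blast
    qed
    moreover have "hd ys = f (hd xs)"
    proof (cases X)
      case Nil then show ?thesis using xs ys_def fp by simp
    next
      case (Cons x X') then show ?thesis using xs ys_def mX by auto
    qed
    moreover have "last ys = f (last xs)"
    proof (cases Z rule: rev_cases)
      case Nil then show ?thesis using xs ys_def fp by simp
    next
      case (snoc Z' z)
      then have "f z = z" using mZ by simp
      then show ?thesis using xs ys_def snoc by simp
    qed
    moreover have "distinct (map (c' \<circ> g) (path_edges ys))"
      using D unfolding col pexs by auto
    ultimately show ?thesis by blast
  qed
qed

end

theorem mainTheorem1: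
  fixes V :: "'a set" and E :: "'a set set" and u v ue ve :: 'a
  assumes "simple_graph V E"
    and "connected_graph V E"
    and "{u, v} \<in> E"
    and "min (degree E u) (degree E v) \<ge> 2"
    and "ue \<notin> V" and "ve \<notin> V" and "ue \<noteq> ve"
  shows "rc_line E \<le> rc_line ((E - {{u, v}}) \<union> {{u, ue}, {v, ve}})"
proof -
  interpret opsetup V E u v ue ve
    using assms by unfold_locales auto
  let ?L = "line_graph_edges E" and ?L' = "line_graph_edges E'"
  show ?thesis
  proof (cases "connected_graph E' ?L'")
    case False then show ?thesis by (simp add: rc_line_def rc_def)
  next
    case True
    have fV: "finite V" using assms(1) unfolding simple_graph_def by blast
    have "E \<subseteq> Pow V" using Esub by blast
    then have fE: "finite E" using fV by (meson finite_Pow_iff finite_subset)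
    then have fE': "finite E'" by simp
    have "?L' \<subseteq> Pow E'" unfolding line_graph_edges_def by blast
    then have fL': "finite ?L'" using fE' by (meson finite_Pow_iff finite_subset)
    define K where "K = (LEAST k. \<exists>c. (\<forall>s\<in>?L'. c s < k) \<and> rainbow_connected E' ?L' c)"
    have "\<exists>c. (\<forall>s\<in>?L'. c s < K) \<and> rainbow_connected E' ?L' c"
      unfolding K_def using exists_col[OF fL' True] by (rule LeastI_ex)
    then obtain c' where c'1: "\<forall>s\<in>?L'. c' s < K" and c'2: "rainbow_connected E' ?L' c'" by blast
    have C1: "\<forall>t\<in>?L. (c' \<circ> g) t < K"
    proof
      fix t assume "t \<in> ?L"
      then obtain s where s: "s \<in> ?L'" "t = f ` s" using surj_line by blast
      then have "g t = s" using key by blast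
      then show "(c' \<circ> g) t < K" using c'1 s by simp
    qed
    have C2: "rainbow_connected E ?L (c' \<circ> g)"
      unfolding rainbow_connected_def
    proof (intro ballI)
      fix x y assume xy: "x \<in> E" "y \<in> E"
      define x' where "x' = (if x = e then a else x)"
      define y' where "y' = (if y = e then a else y)"
      have x': "x' \<in> E'" "f x' = x" using xy abE unfolding x'_def f_def by auto
      have y': "y' \<in> E'" "f y' = y" using xy abE unfolding y'_def f_def by auto
      obtain xs where xs: "is_path E' ?L' xs" "hd xs = x'" "last xs = y'"
        "distinct (map c' (path_edges xs))"
        using c'2 x'(1) y'(1) unfolding rainbow_connected_def by blast
      from path_transfer[OF xs(1) xs(4)] show
        "\<exists>xs. is_path E ?L xs \<and> hd xs = x \<and> last xs = y \<and> distinct (map (c' \<circ> g) (path_edges xs))"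
        using xs(2,3) x'(2) y'(2) by metis
    qed
    have conn: "connected_graph E ?L" using rainbow_conn[OF C2] .
    have le: "(LEAST k. \<exists>c. (\<forall>s\<in>?L. c s < k) \<and> rainbow_connected E ?L c) \<le> K"
      by (rule Least_le) (use C1 C2 in blast)
    show ?thesis unfolding rc_line_def rc_def using True conn le K_def by simp
  qed
qed

end
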